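(* Let $\ell\ge1$, $r_0,\dots,r_\ell\ge1$ integers, $d_0,\dots,d_\ell$ integers, $\mathbf{g}\ge0$ an integer, $\mu_k=d_k/r_k$, $r_V=\sum_kr_k$, $d_V=\sum_kd_k$, $\pi_R=\prod_k(r_k-1)!$, and $c>\max_k\mu_k$ real. With the integrals $\alpha_0,\alpha_j,\alpha_{jk},\beta_0,\beta_j$ defined in the context, for all $1\le j,k\le\ell$ with $j\ne k$: $\alpha_0=\frac{\pi_R}{r_V!}(cr_V-d_V)$, $\alpha_j=\frac{\pi_R}{(r_V+1)!}r_j\big(c(r_V+1)-d_V-\mu_j\big)$, $\alpha_{jk}=\frac{\pi_R}{(r_V+2)!}r_jr_k\big(c(r_V+2)-d_V-\mu_j-\mu_k\big)$, $\alpha_{jj}=\frac{\pi_R}{(r_V+2)!}r_j(r_j+1)\big(c(r_V+2)-d_V-2\mu_j\big)$, $\beta_0=\frac{\pi_R}{(r_V-1)!}\big((r_V-1)r_Vc+2(1-\mathbf{g})-(r_V-1)d_V\big)$, $\beta_j=\frac{\pi_Rr_j}{r_V!}\big(r_V(r_V-1)c+2(1-\mathbf{g})-d_V(r_V-2)-r_V\mu_j\big)$.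
   Context: $\Delta=\{x\in\mathbb{R}^\ell:L_k(x)\ge0,\ k=0,\dots,\ell\}$ with $L_j(x)=x_j$ for $1\le j\le\ell$ and $L_0(x)=1-\sum_{j=1}^\ell x_j$; $d\mu$ is Lebesgue measure on $\mathbb{R}^\ell$; on each facet $F_j=\Delta\cap\{L_j=0\}$, $d\sigma$ is the measure with $dL_j\wedge d\sigma=-d\mu$, and $\int_{\partial\Delta}$ is the sum of the integrals over the facets. $p_c(x)=\big(c-\sum_{k=0}^\ell\mu_kL_k(x)\big)\prod_{k=0}^\ell L_k(x)^{r_k-1}$ and $Q(x)=\frac{2(1-\mathbf{g})}{c-\sum_k\mu_kL_k(x)}+\sum_{k:\,r_k\ge2}\frac{r_k(r_k-1)}{L_k(x)}$. For $1\le r,s\le\ell$: $\alpha_0=\int_\Delta p_c\,d\mu$, $\alpha_r=\int_\Delta x_rp_c\,d\mu$, $\alpha_{rs}=\int_\Delta x_rx_sp_c\,d\mu$, $\beta_0=\int_\Delta Qp_c\,d\mu+\int_{\partial\Delta}p_c\,d\sigma$, $\beta_r=\int_\Delta Qx_rp_c\,d\mu+\int_{\partial\Delta}x_rp_c\,d\sigma$. *)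

theory Defs
  imports "HOL-Analysis.Analysis"
begin

text \<open>Points of R^l are represented as extensional functions nat => real on the
index set {1..l}; Lebesgue measure on R^l is the product measure of lborel over {1..l}.\<close>

definition Lfun :: "nat \<Rightarrow> nat \<Rightarrow> (nat \<Rightarrow> real) \<Rightarrow> real" where
  "Lfun l k x = (if k = 0 then 1 - (\<Sum>j=1..l. x j) else x k)"

definition leb :: "nat \<Rightarrow> (nat \<Rightarrow> real) measure" where
  "leb l = PiM {1..l} (\<lambda>_. lborel)"

definition Dsimplex :: "nat \<Rightarrow> (nat \<Rightarrow> real) set" where
  "Dsimplex l = {x. x \<in> space (leb l) \<and> (\<forall>k\<in>{0..l}. 0 \<le> Lfun l k x)}"

definition mu :: "(nat \<Rightarrow> nat) \<Rightarrow> (nat \<Rightarrow> int) \<Rightarrow> nat \<Rightarrow> real" where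
  "mu r d k = real_of_int (d k) / real (r k)"

definition pc :: "nat \<Rightarrow> (nat \<Rightarrow> nat) \<Rightarrow> (nat \<Rightarrow> int) \<Rightarrow> real \<Rightarrow> (nat \<Rightarrow> real) \<Rightarrow> real" where
  "pc l r d c x = (c - (\<Sum>k=0..l. mu r d k * Lfun l k x)) * (\<Prod>k=0..l. Lfun l k x ^ (r k - 1))"

definition Qfun :: "nat \<Rightarrow> (nat \<Rightarrow> nat) \<Rightarrow> (nat \<Rightarrow> int) \<Rightarrow> nat \<Rightarrow> real \<Rightarrow> (nat \<Rightarrow> real) \<Rightarrow> real" where
  "Qfun l r d g c x = 2 * (1 - real g) / (c - (\<Sum>k=0..l. mu r d k * Lfun l k x))
     + (\<Sum>k\<in>{k\<in>{0..l}. r k \<ge> 2}. real (r k) * (real (r k) - 1) / Lfun l k x)"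

text \<open>Facet F_j is parametrised by the coordinates other than one: for j >= 1 by
(x_i)_{i ~= j} with x_j = 0; for F_0 by (x_1..x_{l-1}) with x_l = 1 - sum. The measure
sigma with dL_j wedge dsigma = - dmu is then (as a positive measure) the (l-1)-dimensional
Lebesgue measure in these coordinates.\<close>

definition facet_emb :: "nat \<Rightarrow> nat \<Rightarrow> (nat \<Rightarrow> real) \<Rightarrow> (nat \<Rightarrow> real)" where
  "facet_emb l j y = (if j = 0 then y(l := 1 - (\<Sum>i=1..<l. y i)) else y(j := 0))"

definition facet_measure :: "nat \<Rightarrow> nat \<Rightarrow> (nat \<Rightarrow> real) measure" where
  "facet_measure l j = PiM ({1..l} - {if j = 0 then l else j}) (\<lambda>_. lborel)"

definition facet_integral :: "nat \<Rightarrow> nat \<Rightarrow> ((nat \<Rightarrow> real) \<Rightarrow> real) \<Rightarrow> real" where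
  "facet_integral l j f =
     (\<integral>y. indicator (Dsimplex l) (facet_emb l j y) * f (facet_emb l j y) \<partial>facet_measure l j)"

definition bdry_integral :: "nat \<Rightarrow> ((nat \<Rightarrow> real) \<Rightarrow> real) \<Rightarrow> real" where
  "bdry_integral l f = (\<Sum>j=0..l. facet_integral l j f)"

definition alpha0 where
  "alpha0 l r d c = (LINT x:Dsimplex l|leb l. pc l r d c x)"
definition alpha1 where
  "alpha1 l r d c i = (LINT x:Dsimplex l|leb l. x i * pc l r d c x)"
definition alpha2 where
  "alpha2 l r d c i j = (LINT x:Dsimplex l|leb l. x i * x j * pc l r d c x)"
definition beta0 where
  "beta0 l r d g c = (LINT x:Dsimplex l|leb l. Qfun l r d g c x * pc l r d c x)
      + bdry_integral l (pc l r d c)"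
definition beta1 where
  "beta1 l r d g c i = (LINT x:Dsimplex l|leb l. Qfun l r d g c x * x i * pc l r d c x)
      + bdry_integral l (\<lambda>x. x i * pc l r d c x)"

definition rV :: "nat \<Rightarrow> (nat \<Rightarrow> nat) \<Rightarrow> nat" where "rV l r = (\<Sum>k=0..l. r k)"
definition dV :: "nat \<Rightarrow> (nat \<Rightarrow> int) \<Rightarrow> int" where "dV l d = (\<Sum>k=0..l. d k)"
definition piR :: "nat \<Rightarrow> (nat \<Rightarrow> nat) \<Rightarrow> real" where
  "piR l r = (\<Prod>k=0..l. fact (r k - 1))"

end

theory Submission
  imports Defs
begin


lemma beta_J:
  fixes t :: real assumes "t \<ge> 0"
  shows "integral {0..t} (\<lambda>y. y^p * (t-y)^m) = t^(p+m+1) * fact p * fact m / fact (p+m+1)"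
proof (induction m arbitrary: p)
  case 0
  have "((\<lambda>y. y^(p+1)/(p+1)) has_real_derivative y^p) (at y)" for y
    by (rule derivative_eq_intros refl | simp)+
  hence "((\<lambda>y. y^p) has_integral (t^(p+1)/(p+1) - 0^(p+1)/(p+1))) {0..t}"
    using assms by (intro fundamental_theorem_of_calculus)
      (auto simp: has_real_derivative_iff_has_vector_derivative[symmetric] intro: has_field_derivative_at_within)
  hence "integral {0..t} (\<lambda>y. y^p) = t^(p+1)/(p+1)" by (simp add: integral_unique)
  thus ?case by (simp add: field_simps del: of_nat_Suc)
next
  case (Suc m)
  let ?F = "\<lambda>y. y^(p+1) * (t-y)^(m+1)"
  let ?f1 = "\<lambda>y. y^p * (t-y)^(m+1)"
  let ?f2 = "\<lambda>y. y^(p+1) * (t-y)^m"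
  have d: "(?F has_real_derivative ((p+1) * ?f1 y - (m+1) * ?f2 y)) (at y)" for y
    by (rule derivative_eq_intros refl | simp add: algebra_simps)+
  have "((\<lambda>y. (p+1) * ?f1 y - (m+1) * ?f2 y) has_integral (?F t - ?F 0)) {0..t}"
    using assms d by (intro fundamental_theorem_of_calculus)
      (auto simp: has_real_derivative_iff_has_vector_derivative[symmetric] intro: has_field_derivative_at_within)
  hence "integral {0..t} (\<lambda>y. (p+1) * ?f1 y - (m+1) * ?f2 y) = 0" by (simp add: integral_unique)
  moreover have "integral {0..t} (\<lambda>y. (p+1) * ?f1 y - (m+1) * ?f2 y)
      = (p+1) * integral {0..t} ?f1 - (m+1) * integral {0..t} ?f2"
    by (subst integral_diff) (auto intro!: integrable_continuous_interval continuous_intros)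
  ultimately have "integral {0..t} ?f1 = (m+1)/(p+1) * integral {0..t} ?f2"
    by (simp add: field_simps)
  also have "integral {0..t} ?f2 = t^(p+1+m+1) * fact (p+1) * fact m / fact (p+1+m+1)" by (rule Suc.IH)
  finally have "integral {0..t} ?f1 = (m+1)/(p+1) * (t^(p+1+m+1) * fact (p+1) * fact m / fact (p+1+m+1))" .
  moreover have "(m+1)/(p+1) * (t^(p+1+m+1) * fact (p+1) * fact m / fact (p+1+m+1)) = t ^ (p + Suc m + 1) * fact p * fact (Suc m) / fact (p + Suc m + 1)"
    by (simp add: field_simps del: of_nat_Suc)
  ultimately show ?case by simp
qed

definition SS :: "nat set \<Rightarrow> real \<Rightarrow> (nat \<Rightarrow> real) set" where
  "SS A t = {x. (\<forall>i\<in>A. 0 \<le> x i) \<and> sum x A \<le> t}"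

lemma SS_meas[measurable]:
  assumes "finite A"
  shows "SS A t \<inter> space (Pi\<^sub>M A (\<lambda>_. lborel)) \<in> sets (Pi\<^sub>M A (\<lambda>_. lborel))"
proof -
  have "SS A t \<inter> space (Pi\<^sub>M A (\<lambda>_. lborel)) =
          Pi\<^sub>E A (\<lambda>_. {0..}) \<inter> (\<lambda>x. sum x A) -` {..t} \<inter> space (Pi\<^sub>M A (\<lambda>_. lborel))"
    by (auto simp: SS_def space_PiM)
  also have "\<dots> \<in> sets (Pi\<^sub>M A (\<lambda>_. lborel))"
    using \<open>finite A\<close> by measurable
  finally show ?thesis .
qed

lemma SS_step:
  assumes "b \<notin> A" "finite A"
  shows   "x(b := y) \<in> SS (insert b A) t \<longleftrightarrow> y \<in> {0..t} \<and> x \<in> SS A (t - y)"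
  using assms sum_nonneg[of A x] unfolding SS_def
  by (force simp: sum_delta_notmem algebra_simps)

lemma dirichlet_nn:
  fixes A :: "nat set" and a :: "nat \<Rightarrow> nat" and t :: real
  assumes "finite A" "t \<ge> 0"
  shows "(\<integral>\<^sup>+ x. indicator (SS A t \<inter> space (Pi\<^sub>M A (\<lambda>_. lborel))) x *
            ennreal ((\<Prod>i\<in>A. x i ^ a i) * (t - sum x A) ^ b) \<partial>Pi\<^sub>M A (\<lambda>_. lborel))
       = ennreal (t ^ (sum a A + b + card A) * (\<Prod>i\<in>A. fact (a i)) * fact b / fact (sum a A + b + card A))"
  using assms
proof (induction arbitrary: t rule: finite_induct)
  case (empty t)
  thus ?case by (simp add: PiM_empty SS_def nn_integral_count_space_finite)
next
  case (insert j A t)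
  let ?M = "\<lambda>A. (Pi\<^sub>M A (\<lambda>_. (lborel::real measure)))"
  define N where "N = sum a A + b + card A"
  define C :: real where "C = (\<Prod>i\<in>A. fact (a i)) * fact b / fact N"
  have Cnn: "C \<ge> 0" unfolding C_def by (intro divide_nonneg_nonneg mult_nonneg_nonneg prod_nonneg) auto
  interpret product_sigma_finite "\<lambda>_. lborel" by standard
  have "(\<integral>\<^sup>+ x. indicator (SS (insert j A) t \<inter> space (?M (insert j A))) x *
            ennreal ((\<Prod>i\<in>insert j A. x i ^ a i) * (t - sum x (insert j A)) ^ b) \<partial>?M (insert j A))
     = (\<integral>\<^sup>+ y. \<integral>\<^sup>+ x. indicator (SS (insert j A) t \<inter> space (?M (insert j A))) (x(j:=y)) *
            ennreal ((\<Prod>i\<in>insert j A. (x(j:=y)) i ^ a i) * (t - sum (x(j:=y)) (insert j A)) ^ b) \<partial>?M A \<partial>(lborel::real measure))"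
    using insert.hyps by (intro product_nn_integral_insert_rev) auto
  also have "\<dots> = (\<integral>\<^sup>+ y. \<integral>\<^sup>+ x. ennreal (indicator {0..t} y * y ^ a j) * (indicator (SS A (t-y) \<inter> space (?M A)) x *
            ennreal ((\<Prod>i\<in>A. x i ^ a i) * ((t - y) - sum x A) ^ b)) \<partial>?M A \<partial>(lborel::real measure))"
  proof (intro nn_integral_cong)
    fix y :: real and x assume x: "x \<in> space (?M A)"
    have p: "(\<Prod>i\<in>insert j A. (x(j:=y)) i ^ a i) = y ^ a j * (\<Prod>i\<in>A. x i ^ a i)"
    proof -
      have "(\<Prod>i\<in>A. (x(j:=y)) i ^ a i) = (\<Prod>i\<in>A. x i ^ a i)" using insert.hyps by (intro prod.cong) auto
      thus ?thesis using insert.hyps by simp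
    qed
    have s: "sum (x(j:=y)) (insert j A) = y + sum x A"
    proof -
      have "(\<Sum>i\<in>A. (x(j:=y)) i) = (\<Sum>i\<in>A. x i)" using insert.hyps by (intro sum.cong) auto
      thus ?thesis using insert.hyps by simp
    qed
    have sp: "x(j:=y) \<in> space (?M (insert j A))" using x by (auto simp: space_PiM PiE_def extensional_def)
    show "indicator (SS (insert j A) t \<inter> space (?M (insert j A))) (x(j:=y)) *
            ennreal ((\<Prod>i\<in>insert j A. (x(j:=y)) i ^ a i) * (t - sum (x(j:=y)) (insert j A)) ^ b)
        = ennreal (indicator {0..t} y * y ^ a j) * (indicator (SS A (t-y) \<inter> space (?M A)) x *
            ennreal ((\<Prod>i\<in>A. x i ^ a i) * ((t - y) - sum x A) ^ b))"
      using SS_step[OF insert.hyps(2,1), of x y t] x sp p s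
      by (auto simp: indicator_def ennreal_mult' algebra_simps)
  qed
  also have "\<dots> = (\<integral>\<^sup>+ y. ennreal (indicator {0..t} y * y ^ a j) * (\<integral>\<^sup>+ x. indicator (SS A (t-y) \<inter> space (?M A)) x *
            ennreal ((\<Prod>i\<in>A. x i ^ a i) * ((t - y) - sum x A) ^ b) \<partial>?M A) \<partial>(lborel::real measure))"
    using insert.hyps by (intro nn_integral_cong nn_integral_cmult) auto
  also have "\<dots> = (\<integral>\<^sup>+ y. ennreal (indicator {0..t} y * (y ^ a j * (t - y) ^ N * C)) \<partial>(lborel::real measure))"
  proof (intro nn_integral_cong)
    fix y :: real
    show "ennreal (indicator {0..t} y * y ^ a j) * (\<integral>\<^sup>+ x. indicator (SS A (t-y) \<inter> space (?M A)) x *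
            ennreal ((\<Prod>i\<in>A. x i ^ a i) * ((t - y) - sum x A) ^ b) \<partial>?M A)
        = ennreal (indicator {0..t} y * (y ^ a j * (t - y) ^ N * C))"
    proof (cases "y \<in> {0..t}")
      case True
      hence "t - y \<ge> 0" by auto
      from insert.IH[OF this] True show ?thesis
        by (simp add: N_def C_def ennreal_mult'[symmetric] mult.assoc)
    qed simp
  qed
  also have "\<dots> = ennreal (C * (t ^ (a j + N + 1) * fact (a j) * fact N / fact (a j + N + 1)))"
  proof -
    have "((\<lambda>y. y ^ a j * (t - y) ^ N) has_integral (t ^ (a j + N + 1) * fact (a j) * fact N / fact (a j + N + 1))) {0..t}"
    proof -
      have "(\<lambda>y. y ^ a j * (t - y) ^ N) integrable_on {0..t}"
        by (intro integrable_continuous_interval continuous_intros)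
      from integrable_integral[OF this] show ?thesis unfolding beta_J[OF insert.prems] .
    qed
    hence "((\<lambda>y. y ^ a j * (t - y) ^ N * C) has_integral (t ^ (a j + N + 1) * fact (a j) * fact N / fact (a j + N + 1)) * C) {0..t}"
      by (rule has_integral_mult_left)
    from nn_integral_has_integral_lebesgue[OF _ this]
    show ?thesis using Cnn by (simp add: ac_simps)
  qed
  also have "C * (t ^ (a j + N + 1) * fact (a j) * fact N / fact (a j + N + 1)) =
      t ^ (sum a (insert j A) + b + card (insert j A)) * (\<Prod>i\<in>insert j A. fact (a i)) * fact b /
        fact (sum a (insert j A) + b + card (insert j A))"
    using insert.hyps by (simp add: C_def N_def algebra_simps)
  finally show ?case .
qed




definition mon :: "nat \<Rightarrow> (nat \<Rightarrow> nat) \<Rightarrow> (nat \<Rightarrow> real) \<Rightarrow> real" where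
  "mon l a x = (\<Prod>k=0..l. Lfun l k x ^ a k)"

definition Dv :: "nat \<Rightarrow> (nat \<Rightarrow> nat) \<Rightarrow> real" where
  "Dv l a = (\<Prod>k=0..l. fact (a k)) / fact (sum a {0..l} + l)"

lemma Lfun_meas[measurable]:
  assumes "k \<le> l" shows "Lfun l k \<in> borel_measurable (leb l)"
proof (cases "k = 0")
  case True
  thus ?thesis unfolding Lfun_def leb_def by simp
next
  case False
  hence "k \<in> {1..l}" using assms by auto
  thus ?thesis using False unfolding Lfun_def leb_def by simp
qed

lemma mon_meas[measurable]: "mon l a \<in> borel_measurable (leb l)"
  unfolding mon_def by (intro borel_measurable_prod borel_measurable_power Lfun_meas) auto

lemma zero_insert: "{0..l} = insert (0::nat) {1..l}" by auto

lemma Dsimplex_eq: "Dsimplex l = SS {1..l} 1 \<inter> space (leb l)"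
  unfolding Dsimplex_def SS_def
  by (auto simp: zero_insert Lfun_def)

lemma Dsimplex_meas[measurable]: "Dsimplex l \<in> sets (leb l)"
  unfolding Dsimplex_eq leb_def by (rule SS_meas) simp

lemma mon_split: "mon l a x = (\<Prod>i\<in>{1..l}. x i ^ a i) * (1 - sum x {1..l}) ^ a 0"
proof -
  have "(\<Prod>i\<in>{1..l}. Lfun l i x ^ a i) = (\<Prod>i\<in>{1..l}. x i ^ a i)"
    by (intro prod.cong) (auto simp: Lfun_def)
  thus ?thesis unfolding mon_def zero_insert by (simp add: Lfun_def)
qed

lemma mon_nonneg: "x \<in> Dsimplex l \<Longrightarrow> 0 \<le> mon l a x"
  unfolding mon_def Dsimplex_def by (auto intro!: prod_nonneg)

lemma D_hbi:
  "has_bochner_integral (leb l) (\<lambda>x. indicator (Dsimplex l) x * mon l a x) (Dv l a)"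
proof (rule has_bochner_integral_nn_integral)
  show "(\<lambda>x. indicator (Dsimplex l) x * mon l a x) \<in> borel_measurable (leb l)" by measurable
  show "AE x in leb l. 0 \<le> indicator (Dsimplex l) x * mon l a x"
    by (auto simp: indicator_def mon_nonneg)
  show "0 \<le> Dv l a" unfolding Dv_def by (auto intro!: prod_nonneg divide_nonneg_nonneg)
  have "(\<integral>\<^sup>+ x. ennreal (indicator (Dsimplex l) x * mon l a x) \<partial>leb l) =
     (\<integral>\<^sup>+ x. indicator (SS {1..l} 1 \<inter> space (Pi\<^sub>M {1..l} (\<lambda>_. lborel))) x *
            ennreal ((\<Prod>i\<in>{1..l}. x i ^ a i) * (1 - sum x {1..l}) ^ a 0) \<partial>Pi\<^sub>M {1..l} (\<lambda>_. lborel))"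
    unfolding leb_def Dsimplex_eq mon_split
    by (intro nn_integral_cong) (auto simp: indicator_def leb_def)
  also have "\<dots> = ennreal (1 ^ (sum a {1..l} + a 0 + card {1..l}) * (\<Prod>i\<in>{1..l}. fact (a i)) * fact (a 0) / fact (sum a {1..l} + a 0 + card {1..l}))"
    by (rule dirichlet_nn) auto
  also have "\<dots> = ennreal (Dv l a)"
    unfolding Dv_def zero_insert by (simp add: ac_simps)
  finally show "(\<integral>\<^sup>+ x. ennreal (indicator (Dsimplex l) x * mon l a x) \<partial>leb l) = ennreal (Dv l a)" .
qed




definition Fv :: "nat \<Rightarrow> (nat \<Rightarrow> nat) \<Rightarrow> nat \<Rightarrow> real" where
  "Fv l a j = (if a j = 0 then Dv l a * real (sum a {0..l} + l) else 0)"

lemma facet_generic: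
  fixes I :: "nat set" and F :: "(nat \<Rightarrow> real) \<Rightarrow> real"
  assumes I: "finite I"
    and eq: "\<And>y. y \<in> space (Pi\<^sub>M I (\<lambda>_. lborel)) \<Longrightarrow> F y = (if P then 1 else 0) *
        (indicator (SS I 1 \<inter> space (Pi\<^sub>M I (\<lambda>_. lborel))) y * ((\<Prod>i\<in>I. y i ^ a i) * (1 - sum y I) ^ b))"
  shows "has_bochner_integral (Pi\<^sub>M I (\<lambda>_. lborel)) F
     (if P then (\<Prod>i\<in>I. fact (a i)) * fact b / fact (sum a I + b + card I) else 0)"
proof -
  let ?M = "Pi\<^sub>M I (\<lambda>_. (lborel::real measure))"
  let ?G = "\<lambda>y. (if P then 1 else 0) *
        (indicator (SS I 1 \<inter> space ?M) y * ((\<Prod>i\<in>I. y i ^ a i) * (1 - sum y I) ^ b))"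
  have "has_bochner_integral ?M ?G
     (if P then (\<Prod>i\<in>I. fact (a i)) * fact b / fact (sum a I + b + card I) else 0)"
  proof (rule has_bochner_integral_nn_integral)
    show "?G \<in> borel_measurable ?M" using I by measurable
    show "AE x in ?M. 0 \<le> ?G x"
      by (intro AE_I2) (auto simp: indicator_def SS_def intro!: prod_nonneg mult_nonneg_nonneg)
    show "(0::real) \<le> (if P then (\<Prod>i\<in>I. fact (a i)) * fact b / fact (sum a I + b + card I) else 0)"
      by (auto intro!: prod_nonneg divide_nonneg_nonneg mult_nonneg_nonneg)
    show "(\<integral>\<^sup>+ x. ennreal (?G x) \<partial>?M) = ennreal (if P then (\<Prod>i\<in>I. fact (a i)) * fact b / fact (sum a I + b + card I) else 0)"
    proof (cases P)
      case True
      have "(\<integral>\<^sup>+ x. ennreal (?G x) \<partial>?M) = (\<integral>\<^sup>+ x. indicator (SS I 1 \<inter> space ?M) x *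
            ennreal ((\<Prod>i\<in>I. x i ^ a i) * (1 - sum x I) ^ b) \<partial>?M)"
        using True by (intro nn_integral_cong) (auto simp: indicator_def)
      also have "\<dots> = ennreal (1 ^ (sum a I + b + card I) * (\<Prod>i\<in>I. fact (a i)) * fact b / fact (sum a I + b + card I))"
        by (rule dirichlet_nn[OF I]) simp
      finally show ?thesis using True by simp
    qed simp
  qed
  moreover have "F \<in> borel_measurable ?M \<longleftrightarrow> ?G \<in> borel_measurable ?M"
    by (rule measurable_cong) (rule eq)
  ultimately show ?thesis
    using eq by (subst has_bochner_integral_cong[where g="?G"]) auto
qed




definition fI :: "nat \<Rightarrow> nat \<Rightarrow> nat set" where
  "fI l j = {1..l} - {if j = 0 then l else j}"
definition fo :: "nat \<Rightarrow> nat \<Rightarrow> nat" where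
  "fo l j = (if j = 0 then l else 0)"

lemma fI_props:
  assumes "l \<ge> 1" "j \<le> l"
  shows "{0..l} = insert j (insert (fo l j) (fI l j))" "j \<noteq> fo l j" "j \<notin> fI l j" "fo l j \<notin> fI l j"
    "finite (fI l j)" "card (fI l j) = l - 1"
  using assms by (auto simp: fI_def fo_def)

lemma emb_Lfun:
  assumes "l \<ge> 1" "j \<le> l" "y \<in> space (Pi\<^sub>M (fI l j) (\<lambda>_. lborel))" "k \<le> l"
  shows "Lfun l k (facet_emb l j y) = (if k = j then 0 else if k = fo l j then 1 - sum y (fI l j) else y k)"
proof (cases "j = 0")
  case True
  have I: "fI l j = {1..<l}" using True assms by (auto simp: fI_def)
  have s: "sum (y(l := 1 - sum y {1..<l})) {1..l} = 1"
  proof -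
    have "{1..l} = insert l {1..<l}" using assms by auto
    moreover have "sum (y(l := 1 - sum y {1..<l})) {1..<l} = sum y {1..<l}" by (intro sum.cong) auto
    ultimately show ?thesis by simp
  qed
  show ?thesis using True assms s I by (auto simp: Lfun_def facet_emb_def fo_def)
next
  case False
  have I: "fI l j = {1..l} - {j}" using False by (auto simp: fI_def)
  have s: "sum (y(j := 0)) {1..l} = sum y (fI l j)"
  proof -
    have h: "{1..l} = insert j (fI l j)" unfolding I using assms False by auto
    have fin: "finite (fI l j)" "j \<notin> fI l j" unfolding I by auto
    have "sum (y(j := 0)) {1..l} = sum (y(j := 0)) (insert j (fI l j))" by (subst h) (rule refl)
    also have "\<dots> = (y(j:=0)) j + sum (y(j := 0)) (fI l j)" by (rule sum.insert[OF fin])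
    also have "sum (y(j := 0)) (fI l j) = sum y (fI l j)" using fin by (intro sum.cong) auto
    finally show ?thesis by simp
  qed
  have e: "facet_emb l j y = y(j := 0)" using False by (simp add: facet_emb_def)
  show ?thesis
  proof (cases "k = 0")
    case True
    thus ?thesis using False s unfolding e by (simp add: Lfun_def fo_def)
  next
    case False
    thus ?thesis using \<open>j \<noteq> 0\<close> unfolding e by (simp add: Lfun_def fo_def)
  qed
qed

lemma emb_space:
  assumes "l \<ge> 1" "j \<le> l" "y \<in> space (Pi\<^sub>M (fI l j) (\<lambda>_. lborel))"
  shows "facet_emb l j y \<in> space (leb l)"
proof -
  define jj where "jj = (if j = 0 then l else j)"
  have e: "facet_emb l j y = y(jj := (if j = 0 then 1 - sum y {1..<l} else 0))"
    by (simp add: facet_emb_def jj_def)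
  have jj: "jj \<in> {1..l}" using assms by (auto simp: jj_def)
  have ext: "\<And>i. i \<notin> fI l j \<Longrightarrow> y i = undefined"
    using assms(3) by (auto simp: space_PiM PiE_def extensional_def)
  have "\<And>i. i \<notin> {1..l} \<Longrightarrow> (facet_emb l j y) i = undefined"
  proof -
    fix i assume i: "i \<notin> {1..l}"
    hence "i \<noteq> jj" "i \<notin> fI l j" using jj by (auto simp: fI_def)
    thus "(facet_emb l j y) i = undefined" unfolding e using ext by simp
  qed
  thus ?thesis by (auto simp: leb_def space_PiM PiE_def extensional_def)
qed

lemma facet_measure_eq: "facet_measure l j = Pi\<^sub>M (fI l j) (\<lambda>_. lborel)"
  unfolding facet_measure_def fI_def ..

lemma F_hbi:
  assumes l: "l \<ge> 1" and j: "j \<le> l"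
  shows "has_bochner_integral (facet_measure l j)
     (\<lambda>y. indicator (Dsimplex l) (facet_emb l j y) * mon l a (facet_emb l j y)) (Fv l a j)"
proof -
  let ?I = "fI l j" and ?o = "fo l j"
  note P = fI_props[OF l j]
  have "has_bochner_integral (Pi\<^sub>M ?I (\<lambda>_. lborel))
     (\<lambda>y. indicator (Dsimplex l) (facet_emb l j y) * mon l a (facet_emb l j y))
     (if a j = 0 then (\<Prod>i\<in>?I. fact (a i)) * fact (a ?o) / fact (sum a ?I + a ?o + card ?I) else 0)"
  proof (rule facet_generic)
    show "finite ?I" by (rule P)
    fix y :: "nat \<Rightarrow> real" assume y: "y \<in> space (Pi\<^sub>M ?I (\<lambda>_. lborel))"
    note L = emb_Lfun[OF l j y]
    have Isub: "?I \<subseteq> {1..l}" by (auto simp: fI_def)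
    have ol: "?o \<le> l" using j by (auto simp: fo_def)
    have Lj: "Lfun l j (facet_emb l j y) = 0" using L[of j] j by simp
    have Lo: "Lfun l ?o (facet_emb l j y) = 1 - sum y ?I" using L[OF ol] P(2) by simp
    have LI: "\<And>k. k \<in> ?I \<Longrightarrow> Lfun l k (facet_emb l j y) = y k"
    proof -
      fix k assume k: "k \<in> ?I"
      hence "k \<le> l" "k \<noteq> j" "k \<noteq> ?o" using Isub P(3,4) by auto
      thus "Lfun l k (facet_emb l j y) = y k" using L[of k] by simp
    qed
    have m: "mon l a (facet_emb l j y) = 0 ^ a j * ((1 - sum y ?I) ^ a ?o * (\<Prod>i\<in>?I. y i ^ a i))"
    proof -
      have "(\<Prod>i\<in>?I. Lfun l i (facet_emb l j y) ^ a i) = (\<Prod>i\<in>?I. y i ^ a i)"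
        using LI by (intro prod.cong) auto
      thus ?thesis unfolding mon_def P(1) using P(2,3,4,5) Lj Lo by simp
    qed
    have d: "facet_emb l j y \<in> Dsimplex l \<longleftrightarrow> y \<in> SS ?I 1"
    proof -
      have "(\<forall>k\<in>?I. 0 \<le> Lfun l k (facet_emb l j y)) \<longleftrightarrow> (\<forall>i\<in>?I. 0 \<le> y i)"
        using LI by auto
      hence "(\<forall>k\<in>{0..l}. 0 \<le> Lfun l k (facet_emb l j y)) \<longleftrightarrow> (\<forall>i\<in>?I. 0 \<le> y i) \<and> sum y ?I \<le> 1"
        unfolding P(1) using Lj Lo by auto
      thus ?thesis using emb_space[OF l j y] by (simp add: Dsimplex_def SS_def)
    qed
    show "indicator (Dsimplex l) (facet_emb l j y) * mon l a (facet_emb l j y) =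
       (if a j = 0 then 1 else 0) * (indicator (SS ?I 1 \<inter> space (Pi\<^sub>M ?I (\<lambda>_. lborel))) y *
         ((\<Prod>i\<in>?I. y i ^ a i) * (1 - sum y ?I) ^ a ?o))"
      using m d y by (simp add: indicator_def)
  qed
  moreover have "(if a j = 0 then (\<Prod>i\<in>?I. fact (a i)) * fact (a ?o) / fact (sum a ?I + a ?o + card ?I) else 0) = Fv l a j"
  proof (cases "a j = 0")
    case True
    define N where "N = sum a ?I + a ?o + (l - 1)"
    have S: "sum a {0..l} + l = Suc N" using P True l by (simp add: N_def)
    have pr: "(\<Prod>k=0..l. fact (a k) :: real) = (\<Prod>i\<in>?I. fact (a i)) * fact (a ?o)"
      using P True by simp
    show ?thesis using True unfolding Fv_def Dv_def S pr N_def P(6)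
      by (simp add: field_simps del: of_nat_Suc)
  qed (simp add: Fv_def)
  ultimately show ?thesis by (simp add: facet_measure_eq)
qed




definition upd :: "(nat \<Rightarrow> nat) \<Rightarrow> nat \<Rightarrow> (nat \<Rightarrow> nat)" where
  "upd a k = a(k := Suc (a k))"

definition Ef :: "nat \<Rightarrow> (nat \<Rightarrow> real) \<Rightarrow> real \<Rightarrow> (nat \<Rightarrow> real) \<Rightarrow> real" where
  "Ef l m c x = c - (\<Sum>k=0..l. m k * Lfun l k x)"

definition G :: "nat \<Rightarrow> (nat \<Rightarrow> real) \<Rightarrow> real \<Rightarrow> (nat \<Rightarrow> nat) \<Rightarrow> (nat \<Rightarrow> real) \<Rightarrow> real" where
  "G l m c a x = c * mon l a x - (\<Sum>k=0..l. m k * mon l (upd a k) x)"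

definition GDv where "GDv l m c a = c * Dv l a - (\<Sum>k=0..l. m k * Dv l (upd a k))"
definition GFv where "GFv l m c a j = c * Fv l a j - (\<Sum>k=0..l. m k * Fv l (upd a k) j)"
definition Wf where "Wf l m a = (\<Sum>k=0..l. m k * (real (a k) + 1))"

lemma upd_comm: "upd (upd a k) j = upd (upd a j) k"
  unfolding upd_def by (auto simp: fun_eq_iff)

lemma mon_upd: "k \<le> l \<Longrightarrow> mon l (upd a k) x = Lfun l k x * mon l a x"
proof -
  assume k: "k \<le> l"
  have "mon l (upd a k) x = Lfun l k x ^ Suc (a k) * (\<Prod>i\<in>{0..l}-{k}. Lfun l i x ^ (upd a k) i)"
    unfolding mon_def using k by (subst prod.remove[of _ k]) (auto simp: upd_def)
  also have "(\<Prod>i\<in>{0..l}-{k}. Lfun l i x ^ (upd a k) i) = (\<Prod>i\<in>{0..l}-{k}. Lfun l i x ^ a i)"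
    by (intro prod.cong) (auto simp: upd_def)
  also have "mon l a x = Lfun l k x ^ a k * (\<Prod>i\<in>{0..l}-{k}. Lfun l i x ^ a i)"
    unfolding mon_def using k by (subst prod.remove[of _ k]) auto
  ultimately show ?thesis by simp
qed

lemma upd_apply: "upd a k i = (if i = k then Suc (a k) else a i)"
  unfolding upd_def by auto

lemma E_mon: "Ef l m c x * mon l a x = G l m c a x"
proof -
  have "(\<Sum>k=0..l. m k * mon l (upd a k) x) = (\<Sum>k=0..l. m k * Lfun l k x * mon l a x)"
    by (intro sum.cong) (auto simp: mon_upd)
  moreover have "mon l a x * (\<Sum>k=0..l. m k * Lfun l k x) = (\<Sum>k=0..l. m k * Lfun l k x * mon l a x)"
    by (simp add: sum_distrib_left mult_ac)
  ultimately show ?thesis unfolding Ef_def G_def by (simp add: algebra_simps)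
qed

lemma Lfun_G: "j \<le> l \<Longrightarrow> Lfun l j x * G l m c a x = G l m c (upd a j) x"
  unfolding G_def by (simp add: algebra_simps sum_distrib_left mon_upd upd_comm[of a _ j])

lemma sum_upd: "k \<le> l \<Longrightarrow> sum (upd a k) {0..l} = Suc (sum a {0..l})"
proof -
  assume k: "k \<le> l"
  have "sum (upd a k) {0..l} = Suc (a k) + sum (upd a k) ({0..l}-{k})"
    using k by (subst sum.remove[of _ k]) (auto simp: upd_def)
  also have "sum (upd a k) ({0..l}-{k}) = sum a ({0..l}-{k})"
    by (intro sum.cong) (auto simp: upd_def)
  also have "sum a {0..l} = a k + sum a ({0..l}-{k})"
    using k by (subst sum.remove[of _ k]) auto
  ultimately show ?thesis by simp
qed

lemma Dv_upd: "k \<le> l \<Longrightarrow> Dv l (upd a k) = Dv l a * (real (a k) + 1) / (real (sum a {0..l} + l) + 1)"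
proof -
  assume k: "k \<le> l"
  have "(\<Prod>i=0..l. fact (upd a k i) :: real) = fact (Suc (a k)) * (\<Prod>i\<in>{0..l}-{k}. fact (upd a k i))"
    using k by (subst prod.remove[of _ k]) (auto simp: upd_def)
  also have "(\<Prod>i\<in>{0..l}-{k}. fact (upd a k i) :: real) = (\<Prod>i\<in>{0..l}-{k}. fact (a i))"
    by (intro prod.cong) (auto simp: upd_def)
  also have "(\<Prod>i=0..l. fact (a i) :: real) = fact (a k) * (\<Prod>i\<in>{0..l}-{k}. fact (a i))"
    using k by (subst prod.remove[of _ k]) auto
  ultimately have p: "(\<Prod>i=0..l. fact (upd a k i) :: real) = (real (a k) + 1) * (\<Prod>i=0..l. fact (a i))"
    by (simp add: algebra_simps)
  have s: "sum (upd a k) {0..l} + l = Suc (sum a {0..l} + l)" using sum_upd[OF k] by simp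
  show ?thesis unfolding Dv_def p s
    by (simp add: field_simps del: of_nat_Suc) (simp add: algebra_simps)
qed

lemma Wf_upd: "j \<le> l \<Longrightarrow> Wf l m (upd a j) = Wf l m a + m j"
proof -
  assume j: "j \<le> l"
  have "Wf l m (upd a j) = (\<Sum>k=0..l. m k * (real (a k) + 1) + (if k = j then m k else 0))"
    unfolding Wf_def by (intro sum.cong) (auto simp: upd_def algebra_simps)
  also have "\<dots> = Wf l m a + m j" unfolding Wf_def sum.distrib using j by simp
  finally show ?thesis .
qed

lemma GDv_eq: "GDv l m c a = Dv l a * (c - Wf l m a / (real (sum a {0..l} + l) + 1))"
proof -
  have "(\<Sum>k=0..l. m k * Dv l (upd a k)) = (\<Sum>k=0..l. Dv l a / (real (sum a {0..l} + l) + 1) * (m k * (real (a k) + 1)))"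
    by (intro sum.cong) (auto simp: Dv_upd)
  also have "\<dots> = Dv l a / (real (sum a {0..l} + l) + 1) * Wf l m a"
    unfolding Wf_def by (simp add: sum_distrib_left)
  finally show ?thesis unfolding GDv_def by (simp add: algebra_simps)
qed

lemma GFv_eq: "j \<le> l \<Longrightarrow> GFv l m c a j = (if a j = 0 then Dv l a * (c * real (sum a {0..l} + l) - Wf l m a + m j) else 0)"
proof -
  assume j: "j \<le> l"
  have "(\<Sum>k=0..l. m k * Fv l (upd a k) j) = (\<Sum>k=0..l. (if a j = 0 then Dv l a * (m k * (real (a k) + 1)) else 0) - (if a j = 0 \<and> k = j then Dv l a * m j else 0))"
  proof (intro sum.cong refl)
    fix k assume k: "k \<in> {0..l}"
    show "m k * Fv l (upd a k) j = (if a j = 0 then Dv l a * (m k * (real (a k) + 1)) else 0) - (if a j = 0 \<and> k = j then Dv l a * m j else 0)"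
    proof (cases "a j = 0")
      case True
      show ?thesis
      proof (cases "k = j")
        case False
        have "upd a k j = 0" using True False by (simp add: upd_apply)
        moreover have "Dv l (upd a k) * real (sum (upd a k) {0..l} + l) = Dv l a * (real (a k) + 1)"
        proof -
          have e: "real (sum (upd a k) {0..l} + l) = real (sum a {0..l} + l) + 1" using k by (simp add: sum_upd)
          have "real (sum a {0..l} + l) + 1 \<noteq> 0" by (metis add_nonneg_pos of_nat_0_le_iff zero_less_one less_irrefl)
          thus ?thesis unfolding e using k by (simp add: Dv_upd)
        qed
        ultimately show ?thesis using True False unfolding Fv_def by simp
      qed (simp add: Fv_def upd_apply True)
    qed (simp add: Fv_def upd_apply)
  qed
  also have "\<dots> = (if a j = 0 then Dv l a * Wf l m a - Dv l a * m j else 0)"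
    using j unfolding sum_subtractf Wf_def by (auto simp: sum_distrib_left)
  finally show ?thesis unfolding GFv_def Fv_def by (auto simp: algebra_simps)
qed




lemma G_meas[measurable]: "G l m c a \<in> borel_measurable (leb l)"
  unfolding G_def by measurable

lemma lin_hbi:
  assumes h: "\<And>b. has_bochner_integral M (\<lambda>x. F x * mon l b (e x)) (V b)"
  shows "has_bochner_integral M (\<lambda>x. F x * G l m c a (e x)) (c * V a - (\<Sum>k=0..l. m k * V (upd a k)))"
proof -
  have "has_bochner_integral M (\<lambda>x. c * (F x * mon l a (e x)) - (\<Sum>k=0..l. m k * (F x * mon l (upd a k) (e x))))
        (c * V a - (\<Sum>k=0..l. m k * V (upd a k)))"
    by (intro has_bochner_integral_diff has_bochner_integral_sum has_bochner_integral_mult_right h)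
  moreover have "(\<lambda>x. c * (F x * mon l a (e x)) - (\<Sum>k=0..l. m k * (F x * mon l (upd a k) (e x))))
     = (\<lambda>x. F x * G l m c a (e x))"
    unfolding G_def by (auto simp: fun_eq_iff algebra_simps sum_distrib_left)
  ultimately show ?thesis by simp
qed

lemma G_hbi: "has_bochner_integral (leb l) (\<lambda>x. indicator (Dsimplex l) x * G l m c a x) (GDv l m c a)"
  using lin_hbi[where e="\<lambda>x. x" and F="indicator (Dsimplex l)" and V="Dv l", OF D_hbi]
  unfolding GDv_def .

lemma GF_hbi:
  assumes "l \<ge> 1" "j \<le> l"
  shows "has_bochner_integral (facet_measure l j)
     (\<lambda>y. indicator (Dsimplex l) (facet_emb l j y) * G l m c a (facet_emb l j y)) (GFv l m c a j)"
  using lin_hbi[where e="facet_emb l j" and F="\<lambda>y. indicator (Dsimplex l) (facet_emb l j y)"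
      and V="\<lambda>b. Fv l b j", OF F_hbi[OF assms]]
  unfolding GFv_def .

lemma set_int_eq:
  "has_bochner_integral M (\<lambda>x. indicator A x * f x) v \<Longrightarrow> (LINT x:A|M. f x) = (v::real)"
  unfolding set_lebesgue_integral_def by (simp add: has_bochner_integral_integral_eq)

lemma null_hyper:
  fixes I :: "nat set" and phi :: "(nat \<Rightarrow> real) \<Rightarrow> real"
  assumes I: "finite I" "i \<in> I"
    and phi: "phi \<in> borel_measurable (Pi\<^sub>M I (\<lambda>_. lborel))"
    and inv: "\<And>x y. phi (x(i := y)) = phi x"
  shows "emeasure (Pi\<^sub>M I (\<lambda>_. lborel)) {x\<in>space (Pi\<^sub>M I (\<lambda>_. lborel)). x i = phi x} = 0"
proof -
  let ?M = "\<lambda>I. Pi\<^sub>M I (\<lambda>_. (lborel::real measure))"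
  let ?N = "{x\<in>space (?M I). x i = phi x}"
  interpret product_sigma_finite "\<lambda>_. (lborel::real measure)" by standard
  have Ieq: "insert i (I - {i}) = I" using I by auto
  have cm: "(\<lambda>x. x i) \<in> borel_measurable (?M I)" using I(2) by simp
  have N[measurable]: "?N \<in> sets (?M I)" by (rule borel_measurable_eq[OF cm phi])
  have "emeasure (?M I) ?N = (\<integral>\<^sup>+ x. indicator ?N x \<partial>?M I)"
    by (simp add: N)
  also have "\<dots> = (\<integral>\<^sup>+ x. indicator ?N x \<partial>?M (insert i (I - {i})))" by (simp only: Ieq)
  also have "\<dots> = (\<integral>\<^sup>+ x. \<integral>\<^sup>+ y. indicator ?N (x(i := y)) \<partial>lborel \<partial>?M (I - {i}))"
  proof -
    have mI: "indicator ?N \<in> borel_measurable (?M (insert i (I - {i})))" unfolding Ieq using N by simp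
    show ?thesis by (rule product_nn_integral_insert[OF _ _ mI]) (use I in auto)
  qed
  also have "\<dots> = (\<integral>\<^sup>+ x. \<integral>\<^sup>+ y. indicator {phi x} y \<partial>lborel \<partial>?M (I - {i}))"
  proof (intro nn_integral_cong)
    fix x y assume x: "x \<in> space (?M (I - {i}))"
    have "x(i := y) \<in> space (?M I)" using x I by (auto simp: space_PiM PiE_def extensional_def)
    thus "indicator ?N (x(i := y)) = (indicator {phi x} y :: ennreal)"
      using inv by (auto simp: indicator_def)
  qed
  also have "\<dots> = 0" by simp
  finally show ?thesis .
qed

lemma AE_from_null:
  fixes I :: "nat set" and phi :: "(nat \<Rightarrow> real) \<Rightarrow> real"
  assumes I: "finite I" "i \<in> I"
    and phi: "phi \<in> borel_measurable (Pi\<^sub>M I (\<lambda>_. lborel))"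
    and inv: "\<And>x y. phi (x(i := y)) = phi x"
  shows "AE x in Pi\<^sub>M I (\<lambda>_. lborel). x i \<noteq> phi x"
proof -
  let ?M = "Pi\<^sub>M I (\<lambda>_. (lborel::real measure))"
  have cm: "(\<lambda>x. x i) \<in> borel_measurable ?M" using I(2) by simp
  have N: "{x\<in>space ?M. x i = phi x} \<in> sets ?M" by (rule borel_measurable_eq[OF cm phi])
  show ?thesis
    by (subst AE_iff_measurable[OF N]) (auto intro: null_hyper[OF I phi inv])
qed

lemma AE_nonzero:
  assumes l: "l \<ge> 1"
  shows "AE x in leb l. \<forall>k\<in>{0..l}. Lfun l k x \<noteq> 0"
proof (rule AE_finite_allI)
  fix k assume k: "k \<in> {0..l}"
  show "AE x in leb l. Lfun l k x \<noteq> 0"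
  proof (cases "k = 0")
    case True
    define phi where "phi = (\<lambda>x::nat \<Rightarrow> real. 1 - sum x ({1..l} - {1}))"
    have h: "\<And>x::nat\<Rightarrow>real. sum x {1..l} = x 1 + sum x ({1..l} - {1})" using l by (subst sum.remove[of _ 1]) auto
    have inv: "\<And>x y. phi (x(1 := y)) = phi x" unfolding phi_def by (intro arg_cong[where f="\<lambda>s. 1 - s"] sum.cong) auto
    have pm: "phi \<in> borel_measurable (Pi\<^sub>M {1..l} (\<lambda>_. lborel))" unfolding phi_def by measurable
    have "AE x in leb l. x 1 \<noteq> phi x"
      unfolding leb_def using l by (intro AE_from_null[OF _ _ pm inv]) auto
    thus ?thesis
    proof (rule eventually_mono)
      fix x :: "nat \<Rightarrow> real" assume "x 1 \<noteq> phi x"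
      thus "Lfun l k x \<noteq> 0" using True h[of x] by (auto simp: Lfun_def phi_def)
    qed
  next
    case False
    hence kk: "k \<in> {1..l}" using k by auto
    have "AE x in leb l. x k \<noteq> (\<lambda>_. 0) x"
      unfolding leb_def using kk by (intro AE_from_null) auto
    thus ?thesis
      by (rule eventually_mono) (use False in \<open>auto simp: Lfun_def\<close>)
  qed
qed simp




context
  fixes l g :: nat and r :: "nat \<Rightarrow> nat" and d :: "nat \<Rightarrow> int" and c :: real
  assumes l1: "l \<ge> 1" and r1: "\<forall>k\<in>{0..l}. r k \<ge> 1" and cmu: "\<forall>k\<in>{0..l}. mu r d k < c"
begin

definition "AA = (\<lambda>k. r k - 1)"
definition "BB k = AA(k := r k - 2)"
definition "KK = {k\<in>{0..l}. r k \<ge> 2}"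

lemma upd_BB: "k \<in> KK \<Longrightarrow> upd (BB k) k = AA"
  unfolding upd_def BB_def KK_def AA_def by (auto simp: fun_eq_iff)

lemma pc_G: "pc l r d c x = G l (mu r d) c AA x"
  unfolding pc_def E_mon[symmetric] Ef_def mon_def AA_def ..

lemma xj_Lfun: "j \<in> {1..l} \<Longrightarrow> x j = Lfun l j x"
  unfolding Lfun_def by auto

lemma alpha0_val: "alpha0 l r d c = GDv l (mu r d) c AA"
  unfolding alpha0_def pc_G by (rule set_int_eq[OF G_hbi])

lemma alpha1_val: "j \<in> {1..l} \<Longrightarrow> alpha1 l r d c j = GDv l (mu r d) c (upd AA j)"
proof -
  assume j: "j \<in> {1..l}"
  have "(\<lambda>x. x j * pc l r d c x) = G l (mu r d) c (upd AA j)"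
    using j by (auto simp: fun_eq_iff pc_G xj_Lfun[OF j] Lfun_G)
  thus ?thesis unfolding alpha1_def by (simp add: set_int_eq[OF G_hbi])
qed

lemma alpha2_val: "i \<in> {1..l} \<Longrightarrow> j \<in> {1..l} \<Longrightarrow> alpha2 l r d c i j = GDv l (mu r d) c (upd (upd AA j) i)"
proof -
  assume i: "i \<in> {1..l}" and j: "j \<in> {1..l}"
  have "(\<lambda>x. x i * x j * pc l r d c x) = G l (mu r d) c (upd (upd AA j) i)"
    using i j by (auto simp: fun_eq_iff pc_G xj_Lfun[OF i] xj_Lfun[OF j] Lfun_G mult.assoc)
  thus ?thesis unfolding alpha2_def by (simp add: set_int_eq[OF G_hbi])
qed

lemma bdry_val: "bdry_integral l (\<lambda>x. G l (mu r d) c a x) = (\<Sum>m=0..l. GFv l (mu r d) c a m)"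
  unfolding bdry_integral_def facet_integral_def
  by (intro sum.cong refl has_bochner_integral_integral_eq GF_hbi) (use l1 in auto)

lemma Ef_pos: "x \<in> Dsimplex l \<Longrightarrow> \<forall>k\<in>{0..l}. Lfun l k x \<noteq> 0 \<Longrightarrow> Ef l (mu r d) c x > 0"
proof -
  assume x: "x \<in> Dsimplex l" and nz: "\<forall>k\<in>{0..l}. Lfun l k x \<noteq> 0"
  have pos: "\<forall>k\<in>{0..l}. Lfun l k x > 0" using x nz unfolding Dsimplex_def by force
  have s1: "(\<Sum>k=0..l. Lfun l k x) = 1"
  proof -
    have "(\<Sum>k\<in>{1..l}. Lfun l k x) = sum x {1..l}" by (intro sum.cong) (auto simp: Lfun_def)
    thus ?thesis unfolding zero_insert by (simp add: Lfun_def)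
  qed
  have "Ef l (mu r d) c x = (\<Sum>k=0..l. (c - mu r d k) * Lfun l k x)"
  proof -
    have "(\<Sum>k=0..l. (c - mu r d k) * Lfun l k x) = c * (\<Sum>k=0..l. Lfun l k x) - (\<Sum>k=0..l. mu r d k * Lfun l k x)"
      by (simp add: algebra_simps sum_subtractf sum_distrib_left)
    thus ?thesis unfolding Ef_def s1 by simp
  qed
  also have "\<dots> > 0" using pos cmu by (intro sum_pos) auto
  finally show ?thesis .
qed

lemma Qpc_pt:
  assumes x: "x \<in> Dsimplex l" and nz: "\<forall>k\<in>{0..l}. Lfun l k x \<noteq> 0"
  shows "Qfun l r d g c x * pc l r d c x =
     2 * (1 - real g) * mon l AA x + (\<Sum>k\<in>KK. real (r k) * (real (r k) - 1) * G l (mu r d) c (BB k) x)"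
proof -
  let ?E = "Ef l (mu r d) c x"
  have E: "?E > 0" by (rule Ef_pos[OF x nz])
  have pc: "pc l r d c x = ?E * mon l AA x" unfolding pc_G E_mon ..
  have "(\<Sum>k\<in>KK. real (r k) * (real (r k) - 1) / Lfun l k x) * (?E * mon l AA x)
      = (\<Sum>k\<in>KK. real (r k) * (real (r k) - 1) * G l (mu r d) c (BB k) x)"
    unfolding sum_distrib_right
  proof (intro sum.cong refl)
    fix k assume k: "k \<in> KK"
    hence kl: "k \<le> l" "Lfun l k x \<noteq> 0" using nz by (auto simp: KK_def)
    have "mon l AA x = Lfun l k x * mon l (BB k) x"
      using mon_upd[OF kl(1), of "BB k" x] upd_BB[OF k] by simp
    thus "real (r k) * (real (r k) - 1) / Lfun l k x * (?E * mon l AA x) =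
       real (r k) * (real (r k) - 1) * G l (mu r d) c (BB k) x"
      using kl(2) by (simp add: E_mon[symmetric] field_simps)
  qed
  moreover have "Qfun l r d g c x = 2 * (1 - real g) / ?E + (\<Sum>k\<in>KK. real (r k) * (real (r k) - 1) / Lfun l k x)"
    unfolding Qfun_def Ef_def KK_def ..
  moreover have "2 * (1 - real g) / ?E * (?E * mon l AA x) = 2 * (1 - real g) * mon l AA x"
    using E by simp
  ultimately show ?thesis unfolding pc by (simp only: distrib_right)
qed

lemma Qfun_meas[measurable]: "Qfun l r d g c \<in> borel_measurable (leb l)"
proof -
  have "\<And>k. k \<in> KK \<Longrightarrow> (\<lambda>x. real (r k) * (real (r k) - 1) / Lfun l k x) \<in> borel_measurable (leb l)"
    by (auto simp: KK_def)
  hence "(\<lambda>x. \<Sum>k\<in>KK. real (r k) * (real (r k) - 1) / Lfun l k x) \<in> borel_measurable (leb l)"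
    by (intro borel_measurable_sum) auto
  moreover have "(\<lambda>x. 2 * (1 - real g) / Ef l (mu r d) c x) \<in> borel_measurable (leb l)"
    unfolding Ef_def by (intro borel_measurable_divide borel_measurable_diff borel_measurable_sum borel_measurable_times Lfun_meas) auto
  ultimately show ?thesis unfolding Qfun_def Ef_def[symmetric] KK_def[symmetric]
    by (intro borel_measurable_add) auto
qed

lemma pc_meas[measurable]: "pc l r d c \<in> borel_measurable (leb l)"
  unfolding pc_G[abs_def] by measurable

lemma beta_int_gen:
  assumes F: "\<And>x. x \<in> Dsimplex l \<Longrightarrow> \<forall>k\<in>{0..l}. Lfun l k x \<noteq> 0 \<Longrightarrow>
      f x = 2 * (1 - real g) * mon l a x + (\<Sum>k\<in>KK. real (r k) * (real (r k) - 1) * G l (mu r d) c (b k) x)"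
    and fm: "f \<in> borel_measurable (leb l)"
  shows "(LINT x:Dsimplex l|leb l. f x) = 2 * (1 - real g) * Dv l a + (\<Sum>k\<in>KK. real (r k) * (real (r k) - 1) * GDv l (mu r d) c (b k))"
proof (rule set_int_eq)
  let ?h = "\<lambda>x. indicator (Dsimplex l) x * (2 * (1 - real g) * mon l a x + (\<Sum>k\<in>KK. real (r k) * (real (r k) - 1) * G l (mu r d) c (b k) x))"
  have "has_bochner_integral (leb l) (\<lambda>x. 2 * (1 - real g) * (indicator (Dsimplex l) x * mon l a x) +
      (\<Sum>k\<in>KK. real (r k) * (real (r k) - 1) * (indicator (Dsimplex l) x * G l (mu r d) c (b k) x)))
     (2 * (1 - real g) * Dv l a + (\<Sum>k\<in>KK. real (r k) * (real (r k) - 1) * GDv l (mu r d) c (b k)))"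
    by (intro has_bochner_integral_add has_bochner_integral_sum has_bochner_integral_mult_right D_hbi G_hbi)
  moreover have "(\<lambda>x. 2 * (1 - real g) * (indicator (Dsimplex l) x * mon l a x) +
      (\<Sum>k\<in>KK. real (r k) * (real (r k) - 1) * (indicator (Dsimplex l) x * G l (mu r d) c (b k) x))) = ?h"
    by (auto simp: fun_eq_iff algebra_simps sum_distrib_left)
  ultimately have h: "has_bochner_integral (leb l) ?h (2 * (1 - real g) * Dv l a + (\<Sum>k\<in>KK. real (r k) * (real (r k) - 1) * GDv l (mu r d) c (b k)))"
    by simp
  show "has_bochner_integral (leb l) (\<lambda>x. indicator (Dsimplex l) x * f x)
     (2 * (1 - real g) * Dv l a + (\<Sum>k\<in>KK. real (r k) * (real (r k) - 1) * GDv l (mu r d) c (b k)))"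
  proof (subst has_bochner_integral_cong_AE[where g="?h"])
    show "(\<lambda>x. indicator (Dsimplex l) x * f x) \<in> borel_measurable (leb l)" using fm by measurable
    show "?h \<in> borel_measurable (leb l)" by measurable
    show "AE x in leb l. indicator (Dsimplex l) x * f x = ?h x"
      using AE_nonzero[OF l1] by (rule eventually_mono) (auto simp: indicator_def F)
  qed (rule h)
qed

lemma beta0_int: "(LINT x:Dsimplex l|leb l. Qfun l r d g c x * pc l r d c x) =
   2 * (1 - real g) * Dv l AA + (\<Sum>k\<in>KK. real (r k) * (real (r k) - 1) * GDv l (mu r d) c (BB k))"
  by (rule beta_int_gen[OF Qpc_pt]) measurable

lemma beta1_int: "j \<in> {1..l} \<Longrightarrow> (LINT x:Dsimplex l|leb l. Qfun l r d g c x * x j * pc l r d c x) =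
   2 * (1 - real g) * Dv l (upd AA j) + (\<Sum>k\<in>KK. real (r k) * (real (r k) - 1) * GDv l (mu r d) c (upd (BB k) j))"
proof (rule beta_int_gen)
  assume j: "j \<in> {1..l}"
  hence jl: "j \<le> l" by auto
  fix x assume x: "x \<in> Dsimplex l" "\<forall>k\<in>{0..l}. Lfun l k x \<noteq> 0"
  have "Qfun l r d g c x * x j * pc l r d c x = Lfun l j x * (Qfun l r d g c x * pc l r d c x)"
    using xj_Lfun[OF j] by simp
  also have "\<dots> = 2 * (1 - real g) * mon l (upd AA j) x + (\<Sum>k\<in>KK. real (r k) * (real (r k) - 1) * G l (mu r d) c (upd (BB k) j) x)"
    unfolding Qpc_pt[OF x] by (simp add: algebra_simps sum_distrib_left mon_upd[OF jl] Lfun_G[OF jl, symmetric])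
  finally show "Qfun l r d g c x * x j * pc l r d c x = \<dots>" .
next
  show "(\<lambda>x. Qfun l r d g c x * x j * pc l r d c x) \<in> borel_measurable (leb l)"
    if "j \<in> {1..l}"
  proof -
    have "(\<lambda>x. x j) \<in> borel_measurable (leb l)" using that unfolding leb_def by simp
    thus ?thesis using pc_meas Qfun_meas by (intro borel_measurable_times) auto
  qed
qed


lemma r_pos: "k \<in> {0..l} \<Longrightarrow> real (r k) \<ge> 1" using r1 by auto

lemma sumAA: "sum AA {0..l} + l + 1 = rV l r"
proof -
  have "rV l r = (\<Sum>k=0..l. AA k + 1)" unfolding rV_def
  proof (intro sum.cong refl)
    fix k assume "k \<in> {0..l}"
    hence "r k \<ge> 1" using r1 by auto
    thus "r k = AA k + 1" unfolding AA_def by simp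
  qed
  also have "\<dots> = sum AA {0..l} + (l + 1)" by (simp only: sum.distrib) simp
  finally show ?thesis by simp
qed

lemma rV2: "rV l r \<ge> 2" using sumAA l1 by linarith

lemma SA: "real (sum AA {0..l} + l) = real (rV l r) - 1"
  using sumAA by (metis add_diff_cancel_right' of_nat_1 of_nat_add)

lemma SA_nat: "sum AA {0..l} + l = rV l r - 1" using sumAA by linarith

lemma D0: "piR l r = Dv l AA * fact (rV l r - 1)"
  unfolding Dv_def piR_def SA_nat by (simp add: AA_def)

lemma sum_r: "(\<Sum>k=0..l. real (r k)) = real (rV l r)" unfolding rV_def by simp

lemma mu_r: "k \<in> {0..l} \<Longrightarrow> real (r k) * mu r d k = real_of_int (d k)"
  using r1 unfolding mu_def by force

lemma sum_rmu: "(\<Sum>k=0..l. real (r k) * mu r d k) = real_of_int (dV l d)"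
  unfolding dV_def by (simp add: mu_r)

lemma WA: "Wf l (mu r d) AA = real_of_int (dV l d)"
proof -
  have "Wf l (mu r d) AA = (\<Sum>k=0..l. real (r k) * mu r d k)"
    unfolding Wf_def AA_def using r1 by (intro sum.cong) (auto simp: of_nat_diff)
  thus ?thesis using sum_rmu by simp
qed

lemma AA1: "k \<in> {0..l} \<Longrightarrow> real (AA k) + 1 = real (r k)"
  using r1 unfolding AA_def by (auto simp: of_nat_diff)

lemma SU: "k \<le> l \<Longrightarrow> real (sum (upd a k) {0..l} + l) = real (sum a {0..l} + l) + 1"
  by (simp add: sum_upd)

lemma fact_pos': "(fact n :: real) > 0" by simp

lemma alpha0_final:
  "alpha0 l r d c = piR l r / fact (rV l r) * (c * real (rV l r) - real_of_int (dV l d))"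
proof -
  have f: "(fact (rV l r) :: real) = real (rV l r) * fact (rV l r - 1)"
    using rV2 by (metis fact_reduce le_trans one_le_numeral not_one_le_zero gr0I of_nat_fact)
  show ?thesis unfolding alpha0_val GDv_eq WA SA D0 f using rV2
    by (simp add: field_simps)
qed


lemma F1: "(fact (rV l r) :: real) = real (rV l r) * fact (rV l r - 1)"
  using rV2 by (metis fact_reduce le_trans one_le_numeral not_one_le_zero gr0I of_nat_fact)
lemma F2: "(fact (rV l r + 1) :: real) = (real (rV l r) + 1) * (real (rV l r) * fact (rV l r - 1))"
  using F1 by simp
lemma F3: "(fact (rV l r + 2) :: real) = (real (rV l r) + 2) * ((real (rV l r) + 1) * (real (rV l r) * fact (rV l r - 1)))"
proof -
  have "(fact (rV l r + 2) :: real) = fact (Suc (rV l r + 1))" by simp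
  also have "\<dots> = real (Suc (rV l r + 1)) * fact (rV l r + 1)" by (rule fact_Suc)
  finally show ?thesis unfolding F2 by simp
qed

lemma P0: "piR l r / fact (rV l r - 1) = Dv l AA" unfolding D0 by simp
lemma P1: "piR l r / fact (rV l r) = Dv l AA / real (rV l r)" unfolding D0 F1 by simp
lemma P2: "piR l r / fact (rV l r + 1) = Dv l AA / ((real (rV l r) + 1) * real (rV l r))" unfolding D0 F2 by simp
lemma P3: "piR l r / fact (rV l r + 2) = Dv l AA / ((real (rV l r) + 2) * ((real (rV l r) + 1) * real (rV l r)))"
  unfolding D0 F3 by simp
lemma R0: "real (rV l r) > 1" using rV2 by simp

lemma DvA1: "j \<le> l \<Longrightarrow> Dv l (upd AA j) = Dv l AA * real (r j) / real (rV l r)"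
  using Dv_upd[of j l AA] AA1[of j] SA by simp

lemma alpha1_final: "j \<in> {1..l} \<Longrightarrow>
  alpha1 l r d c j = piR l r / fact (rV l r + 1) * real (r j) *
           (c * (real (rV l r) + 1) - real_of_int (dV l d) - mu r d j)"
proof -
  assume j: "j \<in> {1..l}"
  hence jl: "j \<le> l" by auto
  have "alpha1 l r d c j = Dv l AA * real (r j) / real (rV l r) *
      (c - (real_of_int (dV l d) + mu r d j) / (real (rV l r) + 1))"
    unfolding alpha1_val[OF j] GDv_eq DvA1[OF jl] Wf_upd[OF jl] WA SU[OF jl] SA by simp
  moreover have "\<And>D rj R V m :: real. R > 1 \<Longrightarrow> D * rj / R * (c - (V + m) / (R + 1)) = D / ((R + 1) * R) * rj * (c * (R + 1) - V - m)"
    by (simp add: field_simps)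
  ultimately show ?thesis unfolding P2 using R0 by simp
qed

lemma alpha2_final: "j \<in> {1..l} \<Longrightarrow> k \<in> {1..l} \<Longrightarrow>
  alpha2 l r d c j k = piR l r / fact (rV l r + 2) * real (r k) * (real (r j) + (if j = k then 1 else 0)) *
           (c * (real (rV l r) + 2) - real_of_int (dV l d) - mu r d j - mu r d k)"
proof -
  assume j: "j \<in> {1..l}" and k: "k \<in> {1..l}"
  hence jl: "j \<le> l" and kl: "k \<le> l" by auto
  have u: "real (upd AA k j) + 1 = real (r j) + (if j = k then 1 else 0)"
    using AA1[of j] jl by (auto simp: upd_apply)
  have "alpha2 l r d c j k = Dv l AA * real (r k) / real (rV l r) * (real (r j) + (if j = k then 1 else 0)) / (real (rV l r) + 1) *
      (c - (real_of_int (dV l d) + mu r d k + mu r d j) / (real (rV l r) + 1 + 1))"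
    unfolding alpha2_val[OF j k] GDv_eq Dv_upd[OF jl] DvA1[OF kl] Wf_upd[OF jl] Wf_upd[OF kl] WA SU[OF jl] SU[OF kl] SA u
    by simp
  moreover have "\<And>D rj rk R V mj mk :: real. R > 1 \<Longrightarrow> D * rk / R * rj / (R + 1) * (c - (V + mk + mj) / (R + 1 + 1)) =
      D / ((R + 2) * ((R + 1) * R)) * rk * rj * (c * (R + 2) - V - mj - mk)"
    by (simp add: field_simps)
  ultimately show ?thesis unfolding P3 using R0 by simp
qed


lemma BB_facts:
  assumes k: "k \<in> KK"
  shows "Dv l (BB k) = Dv l AA * (real (rV l r) - 1) / (real (r k) - 1)"
    and "Wf l (mu r d) (BB k) = real_of_int (dV l d) - mu r d k"
    and "real (sum (BB k) {0..l} + l) + 1 = real (rV l r) - 1"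
proof -
  have kl: "k \<le> l" and rk: "r k \<ge> 2" using k by (auto simp: KK_def)
  have bk: "real (BB k k) + 1 = real (r k) - 1" using rk by (simp add: BB_def of_nat_diff)
  have s: "real (sum (BB k) {0..l} + l) + 1 = real (rV l r) - 1"
    using SU[OF kl, of "BB k"] SA upd_BB[OF k] by simp
  thus "real (sum (BB k) {0..l} + l) + 1 = real (rV l r) - 1" .
  have "Dv l AA = Dv l (BB k) * (real (r k) - 1) / (real (rV l r) - 1)"
    using Dv_upd[OF kl, of "BB k"] upd_BB[OF k] bk s by simp
  moreover have "real (r k) - 1 > 0" "real (rV l r) - 1 > 0" using rk R0 by auto
  ultimately show "Dv l (BB k) = Dv l AA * (real (rV l r) - 1) / (real (r k) - 1)"
    by (simp add: field_simps)
  show "Wf l (mu r d) (BB k) = real_of_int (dV l d) - mu r d k"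
    using Wf_upd[OF kl, of "mu r d" "BB k"] upd_BB[OF k] WA by simp
qed

lemma beta0_term:
  assumes k: "k \<in> {0..l}"
  shows "(if 2 \<le> r k then real (r k) * (real (r k) - 1) * GDv l (mu r d) c (BB k) else 0) + GFv l (mu r d) c AA k
    = real (r k) * Dv l AA * (c * (real (rV l r) - 1) - real_of_int (dV l d) + mu r d k)"
proof (cases "2 \<le> r k")
  case True
  hence kK: "k \<in> KK" using k by (simp add: KK_def)
  have "AA k \<noteq> 0" using True by (simp add: AA_def)
  hence gf: "GFv l (mu r d) c AA k = 0" using k by (simp add: GFv_eq)
  have g: "GDv l (mu r d) c (BB k) = Dv l AA * (real (rV l r) - 1) / (real (r k) - 1) *
     (c - (real_of_int (dV l d) - mu r d k) / (real (rV l r) - 1))"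
    unfolding GDv_eq BB_facts[OF kK] ..
  have p: "real (r k) - 1 > 0" "real (rV l r) - 1 > 0" using True R0 by auto
  have alg: "\<And>rk a b D V m :: real. a > 0 \<Longrightarrow> b > 0 \<Longrightarrow>
     rk * a * (D * b / a * (c - (V - m) / b)) = rk * D * (c * b - V + m)"
    by (simp add: field_simps)
  have "real (r k) * (real (r k) - 1) * GDv l (mu r d) c (BB k) = real (r k) * Dv l AA * (c * (real (rV l r) - 1) - real_of_int (dV l d) + mu r d k)"
    unfolding g by (rule alg[OF p])
  thus ?thesis using True gf by simp
next
  case False
  hence r1k: "r k = 1" using r1 k by force
  hence "AA k = 0" by (simp add: AA_def)
  moreover have kl: "k \<le> l" using k by simp
  ultimately show ?thesis using False r1k unfolding GFv_eq[OF kl] SA WA by simp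
qed

lemma beta0_final:
  "beta0 l r d g c = piR l r / fact (rV l r - 1) *
        ((real (rV l r) - 1) * real (rV l r) * c + 2 * (1 - real g)
         - (real (rV l r) - 1) * real_of_int (dV l d))"
proof -
  have pcG: "pc l r d c = (\<lambda>x. G l (mu r d) c AA x)" by (simp add: fun_eq_iff pc_G)
  have "(\<Sum>k\<in>KK. real (r k) * (real (r k) - 1) * GDv l (mu r d) c (BB k)) + (\<Sum>m=0..l. GFv l (mu r d) c AA m)
      = (\<Sum>k=0..l. real (r k) * Dv l AA * (c * (real (rV l r) - 1) - real_of_int (dV l d) + mu r d k))"
    unfolding KK_def sum.inter_filter[OF finite_atLeastAtMost] sum.distrib[symmetric]
    by (intro sum.cong refl beta0_term)
  also have "\<dots> = Dv l AA * ((c * (real (rV l r) - 1) - real_of_int (dV l d)) * real (rV l r) + real_of_int (dV l d))"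
  proof -
    have "(\<Sum>k=0..l. real (r k) * Dv l AA * (c * (real (rV l r) - 1) - real_of_int (dV l d) + mu r d k))
       = Dv l AA * ((c * (real (rV l r) - 1) - real_of_int (dV l d)) * (\<Sum>k=0..l. real (r k)) + (\<Sum>k=0..l. real (r k) * mu r d k))"
    proof -
      let ?X = "c * (real (rV l r) - 1) - real_of_int (dV l d)"
      have "(\<Sum>k=0..l. real (r k) * Dv l AA * (?X + mu r d k)) = (\<Sum>k=0..l. real (r k) * (Dv l AA * ?X) + Dv l AA * (real (r k) * mu r d k))"
        by (intro sum.cong refl) (simp add: algebra_simps)
      also have "\<dots> = (\<Sum>k=0..l. real (r k)) * (Dv l AA * ?X) + Dv l AA * (\<Sum>k=0..l. real (r k) * mu r d k)"
        by (simp only: sum.distrib sum_distrib_left[symmetric] sum_distrib_right[symmetric])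
      finally show ?thesis by (simp add: algebra_simps)
    qed
    thus ?thesis unfolding sum_r sum_rmu .
  qed
  finally have "beta0 l r d g c = 2 * (1 - real g) * Dv l AA +
     Dv l AA * ((c * (real (rV l r) - 1) - real_of_int (dV l d)) * real (rV l r) + real_of_int (dV l d))"
    unfolding beta0_def beta0_int unfolding pcG bdry_val by simp
  thus ?thesis unfolding P0 by (simp add: algebra_simps)
qed


lemma beta1_term:
  assumes k: "k \<in> {0..l}" and j: "j \<in> {1..l}"
  shows "(if 2 \<le> r k then real (r k) * (real (r k) - 1) * GDv l (mu r d) c (upd (BB k) j) else 0) + GFv l (mu r d) c (upd AA j) k
    = real (r k) * Dv l AA * (real (r j) - (if k = j then 1 else 0)) *
      (c - (real_of_int (dV l d) - mu r d k + mu r d j) / real (rV l r))"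
proof -
  have kl: "k \<le> l" and jl: "j \<le> l" using k j by auto
  have rj: "r j \<ge> 1" using r1 jl by auto
  have R: "real (rV l r) > 0" using R0 by simp
  show ?thesis
  proof (cases "2 \<le> r k")
    case True
    hence kK: "k \<in> KK" using k by (simp add: KK_def)
    have "upd AA j k \<noteq> 0" using True by (simp add: AA_def upd_apply)
    hence gf: "GFv l (mu r d) c (upd AA j) k = 0" using kl by (simp add: GFv_eq)
    have e: "real (BB k j) + 1 = real (r j) - (if k = j then 1 else 0)"
      using True rj by (auto simp: BB_def AA_def of_nat_diff)
    have g: "GDv l (mu r d) c (upd (BB k) j) = Dv l AA * (real (rV l r) - 1) / (real (r k) - 1) *
      (real (r j) - (if k = j then 1 else 0)) / (real (rV l r) - 1) *
      (c - (real_of_int (dV l d) - mu r d k + mu r d j) / real (rV l r))"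
    proof -
      have s: "real (sum (upd (BB k) j) {0..l} + l) + 1 = real (rV l r)"
        using SU[OF jl, of "BB k"] BB_facts(3)[OF kK] by simp
      show ?thesis unfolding GDv_eq Dv_upd[OF jl] Wf_upd[OF jl] s BB_facts[OF kK] e by simp
    qed
    have p: "real (r k) - 1 > 0" "real (rV l r) - 1 > 0" using True R0 by auto
    have alg: "\<And>rk a b D e Z :: real. a > 0 \<Longrightarrow> b > 0 \<Longrightarrow>
       rk * a * (D * b / a * e / b * Z) = rk * D * e * Z"
      by (simp add: field_simps)
    have "real (r k) * (real (r k) - 1) * GDv l (mu r d) c (upd (BB k) j) =
      real (r k) * Dv l AA * (real (r j) - (if k = j then 1 else 0)) *
      (c - (real_of_int (dV l d) - mu r d k + mu r d j) / real (rV l r))"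
      unfolding g by (rule alg[OF p])
    thus ?thesis using True gf by simp
  next
    case False
    hence r1k: "r k = 1" using r1 k by force
    show ?thesis
    proof (cases "k = j")
      case True
      hence "upd AA j k \<noteq> 0" by (simp add: upd_apply)
      hence "GFv l (mu r d) c (upd AA j) k = 0" using kl by (simp add: GFv_eq)
      thus ?thesis using False True r1k by simp
    next
      case kj: False
      hence "upd AA j k = 0" using r1k by (simp add: upd_apply AA_def)
      hence gf: "GFv l (mu r d) c (upd AA j) k = Dv l AA * real (r j) / real (rV l r) *
         (c * real (rV l r) - (real_of_int (dV l d) + mu r d j) + mu r d k)"
        unfolding GFv_eq[OF kl] DvA1[OF jl] Wf_upd[OF jl] WA SU[OF jl] SA by simp
      have alg: "\<And>D rj R V mj mk :: real. R > 0 \<Longrightarrow>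
         D * rj / R * (c * R - (V + mj) + mk) = 1 * D * (rj - 0) * (c - (V - mk + mj) / R)"
        by (simp add: field_simps)
      show ?thesis using False kj r1k gf alg[OF R] by simp
    qed
  qed
qed

lemma beta1_final: "j \<in> {1..l} \<Longrightarrow>
  beta1 l r d g c j = piR l r * real (r j) / fact (rV l r) *
           (real (rV l r) * (real (rV l r) - 1) * c + 2 * (1 - real g)
            - real_of_int (dV l d) * (real (rV l r) - 2) - real (rV l r) * mu r d j)"
proof -
  assume j: "j \<in> {1..l}"
  hence jl: "j \<le> l" and j0: "j \<in> {0..l}" by auto
  let ?D = "Dv l AA" and ?R = "real (rV l r)" and ?V = "real_of_int (dV l d)" and ?rj = "real (r j)"
  let ?Y = "c - (?V + mu r d j) / ?R"
  have R: "?R > 0" using R0 by simp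
  have xpc: "(\<lambda>x. x j * pc l r d c x) = (\<lambda>x. G l (mu r d) c (upd AA j) x)"
    using jl by (simp add: fun_eq_iff pc_G xj_Lfun[OF j] Lfun_G)
  have "(\<Sum>k\<in>KK. real (r k) * (real (r k) - 1) * GDv l (mu r d) c (upd (BB k) j)) + (\<Sum>m=0..l. GFv l (mu r d) c (upd AA j) m)
      = (\<Sum>k=0..l. real (r k) * ?D * (?rj - (if k = j then 1 else 0)) * (c - (?V - mu r d k + mu r d j) / ?R))"
    unfolding KK_def sum.inter_filter[OF finite_atLeastAtMost] sum.distrib[symmetric]
    by (intro sum.cong refl beta1_term j)
  also have "\<dots> = (\<Sum>k=0..l. ?rj * (real (r k) * (?D * ?Y) + ?D / ?R * (real (r k) * mu r d k))
       - (if k = j then real (r k) * ?D * (?Y + mu r d k / ?R) else 0))"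
  proof (intro sum.cong refl)
    fix k
    have "c - (?V - mu r d k + mu r d j) / ?R = ?Y + mu r d k / ?R" using R by (simp add: field_simps)
    thus "real (r k) * ?D * (?rj - (if k = j then 1 else 0)) * (c - (?V - mu r d k + mu r d j) / ?R) =
      ?rj * (real (r k) * (?D * ?Y) + ?D / ?R * (real (r k) * mu r d k))
       - (if k = j then real (r k) * ?D * (?Y + mu r d k / ?R) else 0)"
      by (simp add: algebra_simps)
  qed
  also have "\<dots> = ?rj * ((\<Sum>k=0..l. real (r k)) * (?D * ?Y) + ?D / ?R * (\<Sum>k=0..l. real (r k) * mu r d k))
       - ?rj * ?D * (?Y + mu r d j / ?R)"
    using j0 by (simp only: sum_subtractf sum.distrib sum_distrib_left[symmetric] sum_distrib_right[symmetric] sum.delta' finite_atLeastAtMost) simp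
  also have "\<dots> = ?rj * (?R * (?D * ?Y) + ?D / ?R * ?V) - ?rj * ?D * (?Y + mu r d j / ?R)"
    unfolding sum_r sum_rmu ..
  finally have S: "(\<Sum>k\<in>KK. real (r k) * (real (r k) - 1) * GDv l (mu r d) c (upd (BB k) j)) + (\<Sum>m=0..l. GFv l (mu r d) c (upd AA j) m)
     = ?rj * (?R * (?D * ?Y) + ?D / ?R * ?V) - ?rj * ?D * (?Y + mu r d j / ?R)" .
  have B: "beta1 l r d g c j = 2 * (1 - real g) * (?D * ?rj / ?R) + (?rj * (?R * (?D * ?Y) + ?D / ?R * ?V) - ?rj * ?D * (?Y + mu r d j / ?R))"
    unfolding beta1_def beta1_int[OF j] unfolding xpc bdry_val DvA1[OF jl] S[symmetric] by simp
  have Pq: "piR l r * real (r j) / fact (rV l r) = ?D / ?R * ?rj"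
    using P1 by (metis times_divide_eq_left mult.commute)
  have alg: "\<And>D R V rj m G :: real. R > 0 \<Longrightarrow>
      2 * G * (D * rj / R) + (rj * (R * (D * (c - (V + m) / R)) + D / R * V) - rj * D * ((c - (V + m) / R) + m / R))
      = D / R * rj * (R * (R - 1) * c + 2 * G - V * (R - 2) - R * m)"
    by (simp add: field_simps)
  show ?thesis unfolding B Pq by (rule alg[OF R])
qed

end


theorem proposition3p9:
  fixes l g :: nat and r :: "nat \<Rightarrow> nat" and d :: "nat \<Rightarrow> int" and c :: real
  assumes "l \<ge> 1"
    and "\<forall>k\<in>{0..l}. r k \<ge> 1"
    and "\<forall>k\<in>{0..l}. mu r d k < c"
  shows "alpha0 l r d c = piR l r / fact (rV l r) * (c * real (rV l r) - real_of_int (dV l d))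
    \<and> beta0 l r d g c = piR l r / fact (rV l r - 1) *
        ((real (rV l r) - 1) * real (rV l r) * c + 2 * (1 - real g)
         - (real (rV l r) - 1) * real_of_int (dV l d))
    \<and> (\<forall>j\<in>{1..l}.
        alpha1 l r d c j = piR l r / fact (rV l r + 1) * real (r j) *
           (c * (real (rV l r) + 1) - real_of_int (dV l d) - mu r d j)
      \<and> alpha2 l r d c j j = piR l r / fact (rV l r + 2) * real (r j) * (real (r j) + 1) *
           (c * (real (rV l r) + 2) - real_of_int (dV l d) - 2 * mu r d j)
      \<and> beta1 l r d g c j = piR l r * real (r j) / fact (rV l r) *
           (real (rV l r) * (real (rV l r) - 1) * c + 2 * (1 - real g)
            - real_of_int (dV l d) * (real (rV l r) - 2) - real (rV l r) * mu r d j))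
    \<and> (\<forall>j\<in>{1..l}. \<forall>k\<in>{1..l}. j \<noteq> k \<longrightarrow>
        alpha2 l r d c j k = piR l r / fact (rV l r + 2) * real (r j) * real (r k) *
           (c * (real (rV l r) + 2) - real_of_int (dV l d) - mu r d j - mu r d k))"
proof -
  have a0: "alpha0 l r d c = piR l r / fact (rV l r) * (c * real (rV l r) - real_of_int (dV l d))"
    by (rule alpha0_final[OF assms])
  have b0: "beta0 l r d g c = piR l r / fact (rV l r - 1) *
        ((real (rV l r) - 1) * real (rV l r) * c + 2 * (1 - real g)
         - (real (rV l r) - 1) * real_of_int (dV l d))"
    by (rule beta0_final[OF assms])
  have one: "\<forall>j\<in>{1..l}.
        alpha1 l r d c j = piR l r / fact (rV l r + 1) * real (r j) *
           (c * (real (rV l r) + 1) - real_of_int (dV l d) - mu r d j)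
      \<and> alpha2 l r d c j j = piR l r / fact (rV l r + 2) * real (r j) * (real (r j) + 1) *
           (c * (real (rV l r) + 2) - real_of_int (dV l d) - 2 * mu r d j)
      \<and> beta1 l r d g c j = piR l r * real (r j) / fact (rV l r) *
           (real (rV l r) * (real (rV l r) - 1) * c + 2 * (1 - real g)
            - real_of_int (dV l d) * (real (rV l r) - 2) - real (rV l r) * mu r d j)"
  proof
    fix j assume j: "j \<in> {1..l}"
    have e: "c * (real (rV l r) + 2) - real_of_int (dV l d) - mu r d j - mu r d j =
      c * (real (rV l r) + 2) - real_of_int (dV l d) - 2 * mu r d j" by simp
    show "alpha1 l r d c j = piR l r / fact (rV l r + 1) * real (r j) *
           (c * (real (rV l r) + 1) - real_of_int (dV l d) - mu r d j)
      \<and> alpha2 l r d c j j = piR l r / fact (rV l r + 2) * real (r j) * (real (r j) + 1) *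
           (c * (real (rV l r) + 2) - real_of_int (dV l d) - 2 * mu r d j)
      \<and> beta1 l r d g c j = piR l r * real (r j) / fact (rV l r) *
           (real (rV l r) * (real (rV l r) - 1) * c + 2 * (1 - real g)
            - real_of_int (dV l d) * (real (rV l r) - 2) - real (rV l r) * mu r d j)"
      using alpha1_final[OF assms j] alpha2_final[OF assms j j] beta1_final[OF assms j] e by simp
  qed
  have two: "\<forall>j\<in>{1..l}. \<forall>k\<in>{1..l}. j \<noteq> k \<longrightarrow>
        alpha2 l r d c j k = piR l r / fact (rV l r + 2) * real (r j) * real (r k) *
           (c * (real (rV l r) + 2) - real_of_int (dV l d) - mu r d j - mu r d k)"
  proof (intro ballI impI)
    fix j k assume j: "j \<in> {1..l}" and k: "k \<in> {1..l}" and jk: "j \<noteq> k"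
    show "alpha2 l r d c j k = piR l r / fact (rV l r + 2) * real (r j) * real (r k) *
           (c * (real (rV l r) + 2) - real_of_int (dV l d) - mu r d j - mu r d k)"
      using alpha2_final[OF assms j k] jk by (simp add: mult_ac)
  qed
  show ?thesis using a0 b0 one two by blast
qed

end
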